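(* Let $1<p<\infty$, let $\Psi:\mathbb{R}\to\mathbb{R}$ be a locally absolutely continuous homeomorphism, $w\in A_p(\mathbb{R})$ and $f\in L^p(\mathbb{R},w)$. Then $\mathcal{B}f\circ\Psi$ is locally integrable on $\mathbb{R}$, where $$\mathcal{B}f(x)=\frac1\pi\int_{\mathbb{R}}\log\Big(\frac{|x-t|}{1+|t|}\Big)f(t)\,dt.$$
   Context: $A_p(\mathbb{R})$ is the Muckenhoupt class of weights $w$ with $\sup_I\big(\frac1{|I|}\int_Iw\big)\big(\frac1{|I|}\int_Iw^{1-p'}\big)^{p-1}<\infty$ over intervals $I$; $L^p(\mathbb{R},w)$ has norm $(\int|f|^pw)^{1/p}$. *)

theory Defs
  imports "HOL-Analysis.Analysis"
begin

definition abs_continuous_on_interval :: "real \<Rightarrow> real \<Rightarrow> (real \<Rightarrow> real) \<Rightarrow> bool" where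
  "abs_continuous_on_interval a b F \<longleftrightarrow>
     (\<forall>\<epsilon>>0. \<exists>\<delta>>0. \<forall>(n::nat) (xs::nat \<Rightarrow> real) (ys::nat \<Rightarrow> real).
        (\<forall>i<n. a \<le> xs i \<and> xs i \<le> ys i \<and> ys i \<le> b) \<and>
        (\<forall>i<n. \<forall>j<n. i \<noteq> j \<longrightarrow> ys i \<le> xs j \<or> ys j \<le> xs i) \<and>
        (\<Sum>i<n. ys i - xs i) < \<delta>
        \<longrightarrow> (\<Sum>i<n. \<bar>F (ys i) - F (xs i)\<bar>) < \<epsilon>)"

definition locally_abs_continuous :: "(real \<Rightarrow> real) \<Rightarrow> bool" where
  "locally_abs_continuous F \<longleftrightarrow> (\<forall>a b. a < b \<longrightarrow> abs_continuous_on_interval a b F)"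

definition conj_exp :: "real \<Rightarrow> real" where
  "conj_exp p = p / (p - 1)"

definition Ap_weight :: "real \<Rightarrow> (real \<Rightarrow> real) \<Rightarrow> bool" where
  "Ap_weight p w \<longleftrightarrow>
     w \<in> borel_measurable lborel \<and>
     (AE x in lborel. 0 < w x) \<and>
     (\<forall>a b. a < b \<longrightarrow>
        set_integrable lborel {a..b} w \<and>
        set_integrable lborel {a..b} (\<lambda>x. w x powr (1 - conj_exp p))) \<and>
     (\<exists>C. \<forall>a b. a < b \<longrightarrow>
        ((1 / (b - a)) * (LINT x:{a..b}|lborel. w x)) *
        ((1 / (b - a)) * (LINT x:{a..b}|lborel. w x powr (1 - conj_exp p))) powr (p - 1) \<le> C)"

definition in_Lp_weighted :: "real \<Rightarrow> (real \<Rightarrow> real) \<Rightarrow> (real \<Rightarrow> real) \<Rightarrow> bool" where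
  "in_Lp_weighted p w f \<longleftrightarrow>
     f \<in> borel_measurable lborel \<and>
     integrable lborel (\<lambda>x. \<bar>f x\<bar> powr p * w x)"

definition opB :: "(real \<Rightarrow> real) \<Rightarrow> real \<Rightarrow> real" where
  "opB f x = (1 / pi) * (LINT t|lborel. ln (\<bar>x - t\<bar> / (1 + \<bar>t\<bar>)) * f t)"

definition locally_integrable :: "(real \<Rightarrow> real) \<Rightarrow> bool" where
  "locally_integrable g \<longleftrightarrow> (\<forall>K. compact K \<longrightarrow> set_integrable lborel K g)"

end

theory Submission imports Defs begin

lemma ennreal_term_le_suminf: "(f::nat \<Rightarrow> ennreal) i \<le> suminf f"
  using sum_le_suminf[of f "{i}"] summableI[of f] by simp

lemma ennreal_suminf_mono: "(\<And>i. (f::nat \<Rightarrow> ennreal) i \<le> g i) \<Longrightarrow> suminf f \<le> suminf g"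
  by (rule suminf_le) (auto intro: summableI)

lemma dyadic:
  assumes "1 \<le> (y::real)"
  shows "\<exists>n. 2^n \<le> y \<and> y < 2^Suc n"
proof -
  obtain m where m: "y < 2^m" using real_arch_pow[of 2 y] by auto
  define m0 where "m0 = (LEAST m. y < (2::real)^m)"
  have m0: "y < 2^m0" unfolding m0_def by (rule LeastI[of _ m]) (rule m)
  have "m0 \<noteq> 0"
  proof
    assume "m0 = 0" with m0 assms show False by simp
  qed
  then obtain n where n: "m0 = Suc n" by (cases m0) auto
  have "\<not> y < 2^n" using not_less_Least[of n "\<lambda>m. y < (2::real)^m"] n unfolding m0_def by simp
  then show ?thesis using m0 n by (auto intro!: exI[of _ n])
qed

locale locint =
  fixes h :: "real \<Rightarrow> real"
  assumes h_meas[measurable]: "h \<in> borel_measurable lborel"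
    and h_nn: "AE x in lborel. 0 \<le> h x"
    and h_int0: "\<And>a b. a < b \<Longrightarrow> set_integrable lborel {a..b} h"
begin

definition H :: "real \<Rightarrow> real \<Rightarrow> real" where
  "H a b = (LINT x:{a..b}|lborel. h x)"

lemma h_int: "set_integrable lborel {a..b} h"
proof (cases "a < b")
  case True then show ?thesis by (rule h_int0)
next
  case False
  have "{a..b} \<subseteq> {a..a+1}" using False by auto
  then show ?thesis using set_integrable_subset[OF h_int0[of a "a+1"], of "{a..b}"] by auto
qed

lemma H_alt: "H a b = integral\<^sup>L lborel (\<lambda>x. indicator {a..b} x * h x)"
  unfolding H_def set_lebesgue_integral_def by simp

lemma h_int_ind: "integrable lborel (\<lambda>x. indicator {a..b} x * h x)"
  using h_int[of a b] unfolding set_integrable_def by simp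

lemma H_nn: "(\<integral>\<^sup>+x. ennreal (indicator {a..b} x * h x) \<partial>lborel) = ennreal (H a b)"
  unfolding H_alt
  by (rule nn_integral_eq_integral[OF h_int_ind]) (use h_nn in \<open>auto simp: indicator_def\<close>)

lemma H_nonneg: "0 \<le> H a b"
  unfolding H_alt
  by (rule integral_nonneg_AE) (use h_nn in \<open>auto simp: indicator_def\<close>)

lemma H_mono:
  assumes "{c..d} \<subseteq> {a..b}"
  shows "H c d \<le> H a b"
  unfolding H_alt
  by (rule integral_mono_AE[OF h_int_ind h_int_ind])
     (use h_nn assms in \<open>auto simp: indicator_def\<close>)

lemma H_add:
  assumes "{a..b} \<subseteq> {e..f}" "{c..d} \<subseteq> {e..f}" "b \<le> c"
  shows "H a b + H c d \<le> H e f"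
proof -
  have "H a b + H c d = integral\<^sup>L lborel (\<lambda>x. indicator {a..b} x * h x + indicator {c..d} x * h x)"
    unfolding H_alt by (rule Bochner_Integration.integral_add[symmetric, OF h_int_ind h_int_ind])
  also have "\<dots> \<le> H e f"
    unfolding H_alt
  proof (rule integral_mono_AE)
    show "integrable lborel (\<lambda>x. indicator {a..b} x * h x + indicator {c..d} x * h x)"
      by (intro Bochner_Integration.integrable_add h_int_ind)
    show "integrable lborel (\<lambda>x. indicator {e..f} x * h x)" by (rule h_int_ind)
    have "AE x in lborel. x \<noteq> b" by (rule AE_lborel_singleton)
    then show "AE x in lborel. indicator {a..b} x * h x + indicator {c..d} x * h x \<le> indicator {e..f} x * h x"
      using h_nn by eventually_elim (use assms in \<open>auto simp: indicator_def subset_iff\<close>)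
  qed
  finally show ?thesis .
qed

lemma H_pos:
  assumes "a < b" and pos: "AE x in lborel. 0 < h x"
  shows "0 < H a b"
proof -
  have "H a b \<noteq> 0"
  proof
    assume "H a b = 0"
    then have "AE x in lborel. indicator {a..b} x * h x = 0"
      unfolding H_alt
      by (subst (asm) integral_nonneg_eq_0_iff_AE[OF h_int_ind]) (use h_nn in \<open>auto simp: indicator_def\<close>)
    with pos have "AE x in lborel. x \<notin> {a..b}"
      by eventually_elim (auto simp: indicator_def)
    then have "{a..b} \<in> null_sets lborel"
      by (simp add: AE_iff_null_sets)
    then have "emeasure lborel {a..b} = 0" by auto
    then show False using assms by simp
  qed
  then show ?thesis using H_nonneg[of a b] by simp
qed

end


locale apw =
  fixes p :: real and w :: "real \<Rightarrow> real"
  assumes p1: "1 < p" and Ap: "Ap_weight p w"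
begin

definition q :: real where "q = conj_exp p"
definition sg :: "real \<Rightarrow> real" where "sg t = w t powr (1 - q)"

lemma q_eq: "q = p / (p - 1)" unfolding q_def conj_exp_def ..
lemma q1: "1 < q" using p1 unfolding q_eq by (simp add: field_simps)
lemma pq: "1/p + 1/q = 1" using p1 unfolding q_eq by (simp add: field_simps)
lemma qm1: "q - 1 = 1 / (p - 1)" using p1 unfolding q_eq by (simp add: field_simps)
lemma pdq: "p / q = p - 1" using p1 unfolding q_eq by (simp add: field_simps)

lemma w_meas[measurable]: "w \<in> borel_measurable lborel"
  using Ap unfolding Ap_weight_def by auto
lemma w_pos: "AE x in lborel. 0 < w x"
  using Ap unfolding Ap_weight_def by auto
lemma sg_meas[measurable]: "sg \<in> borel_measurable lborel"
  unfolding sg_def by measurable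
lemma sg_nonneg: "0 \<le> sg t" unfolding sg_def by simp
lemma sg_pos: "AE x in lborel. 0 < sg x"
  using w_pos by eventually_elim (simp add: sg_def)

sublocale Wl: locint w
proof
  show "AE x in lborel. 0 \<le> w x" using w_pos by eventually_elim simp
  show "\<And>a b. a < b \<Longrightarrow> set_integrable lborel {a..b} w"
    using Ap unfolding Ap_weight_def by auto
qed simp

sublocale Sl: locint sg
proof
  show "\<And>a b. a < b \<Longrightarrow> set_integrable lborel {a..b} sg"
    using Ap unfolding Ap_weight_def sg_def q_def by auto
qed (auto simp: sg_nonneg)

definition C :: real where
  "C = (SOME C. \<forall>a b. a < b \<longrightarrow>
        ((1 / (b - a)) * (LINT x:{a..b}|lborel. w x)) *
        ((1 / (b - a)) * (LINT x:{a..b}|lborel. w x powr (1 - conj_exp p))) powr (p - 1) \<le> C)"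

lemma Ap_C: "a < b \<Longrightarrow> ((1 / (b - a)) * Wl.H a b) * ((1 / (b - a)) * Sl.H a b) powr (p - 1) \<le> C"
proof -
  have "\<exists>C. \<forall>a b. a < b \<longrightarrow>
        ((1 / (b - a)) * (LINT x:{a..b}|lborel. w x)) *
        ((1 / (b - a)) * (LINT x:{a..b}|lborel. w x powr (1 - conj_exp p))) powr (p - 1) \<le> C"
    using Ap unfolding Ap_weight_def by blast
  from someI_ex[OF this] show "a < b \<Longrightarrow> ?thesis"
    unfolding C_def[symmetric] Wl.H_def Sl.H_def sg_def q_def by blast
qed

lemma ApWS:
  assumes "a < b"
  shows "Wl.H a b * Sl.H a b powr (p - 1) \<le> C * (b - a) powr p"
proof -
  have W: "0 \<le> Wl.H a b" and S: "0 \<le> Sl.H a b" by (rule Wl.H_nonneg, rule Sl.H_nonneg)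
  have L: "0 < b - a" using assms by simp
  have eq: "((1 / (b - a)) * Wl.H a b) * ((1 / (b - a)) * Sl.H a b) powr (p - 1)
      = (Wl.H a b * Sl.H a b powr (p - 1)) / (b - a) powr p"
  proof -
    have "((1 / (b - a)) * Sl.H a b) powr (p - 1) = Sl.H a b powr (p - 1) / (b-a) powr (p-1)"
      using L S by (simp add: powr_divide)
    moreover have "(b - a) powr p = (b-a) * (b-a) powr (p-1)"
      using powr_add[of "b-a" 1 "p-1"] L by simp
    moreover have "\<And>Lp Lq W Sq. Lq > 0 \<Longrightarrow> Lp = (b-a)*Lq \<Longrightarrow> (1/(b-a)*W)*(Sq/Lq) = W*Sq/Lp"
      using L by (simp add: field_simps)
    ultimately show ?thesis using L by simp
  qed
  have "(Wl.H a b * Sl.H a b powr (p - 1)) / (b - a) powr p \<le> C"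
    using Ap_C[OF assms] unfolding eq .
  then show ?thesis using L by (simp add: divide_le_eq)
qed

lemma F1:
  assumes "a < b"
  shows "(b - a) powr p \<le> Wl.H a b * Sl.H a b powr (p - 1)"
proof -
  define W where "W = Wl.H a b"
  define S where "S = Sl.H a b"
  have W0: "0 < W" unfolding W_def by (rule Wl.H_pos[OF assms w_pos])
  have S0: "0 < S" unfolding S_def by (rule Sl.H_pos[OF assms sg_pos])
  define X where "X = W powr (1/p) * S powr (1/q)"
  have X0: "0 < X" unfolding X_def using W0 S0 by simp
  have pw: "1 / X \<le> (w t / W) / p + (sg t / S) / q" if wt: "0 < w t" for t
  proof -
    have "(w t / W) powr (1/p) * (sg t / S) powr (1/q)
        \<le> ((w t / W) powr (1/p)) powr p / p + ((sg t / S) powr (1/q)) powr q / q"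
      by (rule Youngs_inequality) (use p1 q1 pq in auto)
    also have "\<dots> = (w t / W) / p + (sg t / S) / q"
      using p1 q1 wt W0 S0 by (simp add: powr_powr sg_def)
    also have "(w t / W) powr (1/p) * (sg t / S) powr (1/q) = 1 / X"
    proof -
      have "(sg t) powr (1/q) = w t powr ((1 - q) / q)"
        unfolding sg_def using wt by (simp add: powr_powr)
      also have "(1 - q)/q = - (1/p)" using pq q1 by (simp add: field_simps)
      finally have e: "(sg t) powr (1/q) = w t powr (- (1/p))" .
      show ?thesis
        using wt W0 S0 unfolding X_def
        by (simp add: powr_divide e powr_minus field_simps)
    qed
    finally show ?thesis .
  qed
  have "integral\<^sup>L lborel (\<lambda>x. indicator {a..b} x * (1 / X))
      \<le> integral\<^sup>L lborel (\<lambda>x. indicator {a..b} x * w x / (W * p) + indicator {a..b} x * sg x / (S * q))"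
  proof (rule integral_mono_AE)
    show "integrable lborel (\<lambda>x. indicator {a..b} x * (1 / X))"
      using assms by (intro integrable_mult_left integrable_real_indicator) auto
  next
    show "integrable lborel (\<lambda>x. indicator {a..b} x * w x / (W * p) + indicator {a..b} x * sg x / (S * q))"
      by (intro Bochner_Integration.integrable_add integrable_divide Wl.h_int_ind Sl.h_int_ind)
  next
    show "AE x in lborel. indicator {a..b} x * (1 / X)
        \<le> indicator {a..b} x * w x / (W * p) + indicator {a..b} x * sg x / (S * q)"
      using w_pos by eventually_elim (use pw in \<open>auto simp: indicator_def field_simps\<close>)
  qed
  also have "integral\<^sup>L lborel (\<lambda>x. indicator {a..b} x * (1 / X)) = (b - a) / X"
    using assms by (simp add: integral_mult_left[where c="1/X", symmetric, simplified mult.commute] measure_lborel_Icc)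
  also have "integral\<^sup>L lborel (\<lambda>x. indicator {a..b} x * w x / (W * p) + indicator {a..b} x * sg x / (S * q))
      = W / (W * p) + S / (S * q)"
    unfolding W_def S_def Wl.H_alt Sl.H_alt
    by (simp add: Bochner_Integration.integral_add integrable_divide Wl.h_int_ind Sl.h_int_ind)
  also have "\<dots> = 1" using W0 S0 pq by simp
  finally have "b - a \<le> X" using X0 by (simp add: divide_le_eq)
  then have "(b - a) powr p \<le> X powr p"
    using assms p1 by (intro powr_mono2) auto
  also have "X powr p = W * S powr (p - 1)"
    unfolding X_def using W0 S0 p1 by (simp add: powr_mult powr_powr pdq)
  finally show ?thesis unfolding W_def S_def .
qed

lemma C_pos: "0 < C"
proof -
  have "(1 - 0) powr p \<le> Wl.H 0 1 * Sl.H 0 1 powr (p - 1)" by (rule F1) simp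
  also have "\<dots> \<le> C * (1 - 0) powr p" by (rule ApWS) simp
  finally show ?thesis by simp
qed


definition kW :: real where "kW = 1 / (C * 4 powr p)"
definition kS :: real where "kS = (1 / (C * 4 powr p)) powr (q - 1)"

lemma kW_pos: "0 < kW" unfolding kW_def using C_pos by simp
lemma kS_pos: "0 < kS" unfolding kS_def using C_pos by simp

lemma pq1: "(p - 1) * (q - 1) = 1" using p1 qm1 by simp

lemma quarter:
  assumes "a < b" "c < d" "a \<le> c" "d \<le> b" "4 * (d - c) = b - a"
  shows "kW * Wl.H a b \<le> Wl.H c d" "kS * Sl.H a b \<le> Sl.H c d"
proof -
  define WI WJ SI SJ where "WI = Wl.H a b" "WJ = Wl.H c d" "SI = Sl.H a b" "SJ = Sl.H c d"
  have sub: "{c..d} \<subseteq> {a..b}" using assms by auto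
  have WI0: "0 < WI" and WJ0: "0 < WJ" and SI0: "0 < SI" and SJ0: "0 < SJ"
    unfolding WI_WJ_SI_SJ_def using assms
    by (auto intro!: Wl.H_pos Sl.H_pos w_pos sg_pos)
  have WJI: "WJ \<le> WI" and SJI: "SJ \<le> SI"
    unfolding WI_WJ_SI_SJ_def using sub by (auto intro!: Wl.H_mono Sl.H_mono)
  have F: "(d - c) powr p \<le> WJ * SJ powr (p - 1)"
    unfolding WI_WJ_SI_SJ_def by (rule F1) (use assms in auto)
  have A: "WI * SI powr (p - 1) \<le> C * (4 powr p * (d - c) powr p)"
  proof -
    have "WI * SI powr (p - 1) \<le> C * (b - a) powr p"
      unfolding WI_WJ_SI_SJ_def by (rule ApWS) (use assms in auto)
    also have "(b - a) powr p = 4 powr p * (d - c) powr p"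
      using assms(2) powr_mult[of 4 "d - c" p] by (simp flip: assms(5))
    finally show ?thesis .
  qed
  have C4: "0 < C * 4 powr p" using C_pos by simp
  have "WI * SI powr (p - 1) \<le> C * 4 powr p * (WJ * SI powr (p - 1))"
  proof -
    have "WJ * SJ powr (p - 1) \<le> WJ * SI powr (p - 1)"
      using SJI SJ0 WJ0 p1 by (intro mult_left_mono powr_mono2) auto
    with F have "(d - c) powr p \<le> WJ * SI powr (p - 1)" by linarith
    then have "C * (4 powr p * (d - c) powr p) \<le> C * 4 powr p * (WJ * SI powr (p - 1))"
      using C_pos by (simp add: mult.assoc)
    with A show ?thesis by linarith
  qed
  then have "WI \<le> C * 4 powr p * WJ"
    using SI0 by (simp add: mult.assoc mult.left_commute[of WJ])
  then show "kW * Wl.H a b \<le> Wl.H c d"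
    unfolding kW_def WI_WJ_SI_SJ_def[symmetric] using C4 by (simp add: field_simps)
  have "(d - c) powr p * SI powr (p - 1) \<le> C * 4 powr p * ((d - c) powr p * SJ powr (p - 1))"
  proof -
    have "(d - c) powr p * SI powr (p - 1) \<le> WI * SJ powr (p - 1) * SI powr (p - 1)"
    proof -
      have "WJ * SJ powr (p - 1) \<le> WI * SJ powr (p - 1)"
        using WJI by (intro mult_right_mono) auto
      with F show ?thesis by (intro mult_right_mono) auto
    qed
    also have "\<dots> = (WI * SI powr (p - 1)) * SJ powr (p - 1)" by simp
    also have "\<dots> \<le> C * (4 powr p * (d - c) powr p) * SJ powr (p - 1)"
      using A by (intro mult_right_mono) auto
    finally show ?thesis by simp
  qed
  then have "SI powr (p - 1) \<le> C * 4 powr p * SJ powr (p - 1)"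
    using assms by (simp add: mult.left_commute[of "(d - c) powr p"])
  then have "SI powr (p - 1) / (C * 4 powr p) \<le> SJ powr (p - 1)"
    using C4 by (simp add: divide_le_eq mult.commute)
  then have "(SI powr (p - 1) / (C * 4 powr p)) powr (q - 1) \<le> (SJ powr (p - 1)) powr (q - 1)"
    using q1 C4 by (intro powr_mono2) auto
  also have "(SJ powr (p - 1)) powr (q - 1) = SJ"
    using SJ0 by (simp add: powr_powr pq1)
  also have "(SI powr (p - 1) / (C * 4 powr p)) powr (q - 1) = SI * kS"
    unfolding kS_def using SI0 C4 by (simp add: powr_divide powr_powr pq1)
  finally show "kS * Sl.H a b \<le> Sl.H c d"
    unfolding WI_WJ_SI_SJ_def by (simp add: mult.commute)
qed


lemma kS_le1: "kS \<le> 1"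
proof -
  have "kS * Sl.H 0 4 \<le> Sl.H 3 4" by (rule quarter) auto
  also have "\<dots> \<le> Sl.H 0 4" by (rule Sl.H_mono) auto
  finally show ?thesis using Sl.H_pos[of 0 4, OF _ sg_pos] by simp
qed

lemma kW_le1: "kW \<le> 1"
proof -
  have "kW * Wl.H 0 4 \<le> Wl.H 3 4" by (rule quarter) auto
  also have "\<dots> \<le> Wl.H 0 4" by (rule Wl.H_mono) auto
  finally show ?thesis using Wl.H_pos[of 0 4, OF _ w_pos] by simp
qed

lemma S_decay1:
  assumes "0 < r"
  shows "Sl.H (x - r/2) (x + r/2) \<le> (1 - kS) * Sl.H (x - r) (x + r)"
proof -
  have "kS * Sl.H (x - r) (x + r) \<le> Sl.H (x + r/2) (x + r)"
    by (rule quarter) (use assms in auto)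
  moreover have "Sl.H (x - r/2) (x + r/2) + Sl.H (x + r/2) (x + r) \<le> Sl.H (x - r) (x + r)"
    by (rule Sl.H_add) (use assms in auto)
  ultimately show ?thesis by (simp add: algebra_simps)
qed

lemma S_decay: "Sl.H (x - (1/2)^k) (x + (1/2)^k) \<le> (1 - kS)^k * Sl.H (x - 1) (x + 1)"
proof (induction k)
  case 0 then show ?case by simp
next
  case (Suc k)
  have "Sl.H (x - (1/2)^Suc k) (x + (1/2)^Suc k) \<le> (1 - kS) * Sl.H (x - (1/2)^k) (x + (1/2)^k)"
    using S_decay1[of "(1/2)^k" x] by simp
  also have "\<dots> \<le> (1 - kS) * ((1 - kS)^k * Sl.H (x - 1) (x + 1))"
    using Suc kS_le1 by (intro mult_left_mono) auto
  finally show ?case by simp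
qed

lemma W_grow1: "Wl.H (-(2^k)) (2^k) \<le> (1 - kW) * Wl.H (-(2^Suc k)) (2^Suc k)"
proof -
  have "kW * Wl.H (-(2^Suc k)) (2^Suc k) \<le> Wl.H (2^k) (2^Suc k)"
    by (rule quarter) auto
  moreover have "Wl.H (-(2^k)) (2^k) + Wl.H (2^k) (2^Suc k) \<le> Wl.H (-(2^Suc k)) (2^Suc k)"
    by (rule Wl.H_add) auto
  ultimately show ?thesis by (simp add: algebra_simps)
qed

lemma W_grow: "Wl.H (-1) 1 \<le> (1 - kW)^k * Wl.H (-(2^k)) (2^k)"
proof (induction k)
  case 0 then show ?case by simp
next
  case (Suc k)
  have "Wl.H (-1) 1 \<le> (1 - kW)^k * Wl.H (-(2^k)) (2^k)" by (rule Suc)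
  also have "\<dots> \<le> (1 - kW)^k * ((1 - kW) * Wl.H (-(2^Suc k)) (2^Suc k))"
    using W_grow1[of k] kW_le1 by (intro mult_left_mono) auto
  finally show ?case by (simp add: ac_simps)
qed

lemma kW_lt1: "kW < 1"
proof -
  have "0 < Wl.H (-1) 1" by (rule Wl.H_pos[OF _ w_pos]) simp
  also have "\<dots> \<le> (1 - kW)^1 * Wl.H (-(2^1)) (2^1)" by (rule W_grow)
  finally show ?thesis using Wl.H_nonneg[of "-(2^1)" "2^1"]
    by (simp add: zero_less_mult_iff)
qed

definition rhoW :: real where "rhoW = (1 - kW) powr (q - 1)"

lemma rhoW: "0 < rhoW" "rhoW < 1"
  using kW_lt1 unfolding rhoW_def apply simp
  using powr_less_mono2[of "q-1" "1-kW" 1] kW_lt1 kW_pos q1 unfolding rhoW_def by simp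

definition KS :: real where "KS = (C / Wl.H (-1) 1) powr (q - 1) * 2 powr q"

lemma S_tail: "Sl.H (-(2^k)) (2^k) \<le> KS * (2 powr q)^k * rhoW^k"
proof -
  define Wk Sk W0 where "Wk = Wl.H (-(2^k)) (2^k)" "Sk = Sl.H (-(2^k)) (2^k)" "W0 = Wl.H (-1) 1"
  have Wk0: "0 < Wk" and Sk0: "0 < Sk" and W00: "0 < W0"
    unfolding Wk_Sk_W0_def by (auto intro!: Wl.H_pos Sl.H_pos w_pos sg_pos)
  have "Wk * Sk powr (p - 1) \<le> C * (2^k - (-(2^k))) powr p"
    unfolding Wk_Sk_W0_def by (rule ApWS) simp
  also have "(2^k - (-(2^k)) :: real) = 2 ^ Suc k" by simp
  finally have "Sk powr (p - 1) \<le> C * (2 ^ Suc k) powr p / Wk"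
    using Wk0 by (simp add: field_simps)
  also have "\<dots> \<le> C * (2 ^ Suc k) powr p * (1 - kW)^k / W0"
  proof -
    have "W0 \<le> (1 - kW)^k * Wk" unfolding Wk_Sk_W0_def by (rule W_grow)
    then have "1 / Wk \<le> (1 - kW)^k / W0"
      using Wk0 W00 by (simp add: field_simps)
    then have "C * (2 ^ Suc k) powr p * (1 / Wk) \<le> C * (2 ^ Suc k) powr p * ((1 - kW)^k / W0)"
      using C_pos by (intro mult_left_mono) auto
    then show ?thesis by simp
  qed
  finally have "(Sk powr (p - 1)) powr (q - 1) \<le> (C * (2 ^ Suc k) powr p * (1 - kW)^k / W0) powr (q - 1)"
    using q1 by (intro powr_mono2) auto
  also have "(Sk powr (p - 1)) powr (q - 1) = Sk" using Sk0 by (simp add: powr_powr pq1)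
  also have "(C * (2 ^ Suc k) powr p * (1 - kW)^k / W0) powr (q - 1)
      = (C / W0) powr (q - 1) * ((2 ^ Suc k) powr p) powr (q - 1) * ((1 - kW)^k) powr (q - 1)"
    using C_pos W00 kW_lt1 by (simp add: powr_mult powr_divide)
  also have "((2 ^ Suc k) powr p) powr (q - 1) = ((2::real) ^ Suc k) powr q"
    using p1 q_eq by (simp add: powr_powr field_simps)
  also have "((2::real) ^ Suc k) powr q = 2 powr q * (2 powr q)^k"
  proof -
    have e1: "(2::real)^Suc k = 2 powr real (Suc k)" by (rule powr_realpow[symmetric]) simp
    have e2: "(2 powr q)^k = (2::real) powr (q * real k)"
      by (subst powr_realpow[symmetric]) (auto simp: powr_powr)
    show ?thesis unfolding e1 e2 powr_powr by (simp add: powr_add[symmetric] algebra_simps)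
  qed
  also have "((1 - kW)^k) powr (q - 1) = rhoW^k"
    unfolding rhoW_def using kW_lt1 by (simp add: powr_realpow[symmetric] powr_powr mult.commute)
  finally show ?thesis unfolding KS_def Wk_Sk_W0_def by (simp add: algebra_simps)
qed


definition KT :: real where "KT = 2 powr q * KS / (1 - rhoW)"

lemma tail_pointwise:
  "ennreal (sg t * (1 + \<bar>t\<bar>) powr (- q))
   \<le> (\<Sum>k. ennreal (2 powr q * ((1/2) powr q)^k * (indicator {-(2^k)..2^k} t * sg t)))"
proof -
  obtain n where n: "2^n \<le> 1 + \<bar>t\<bar>" "1 + \<bar>t\<bar> < 2^Suc n" using dyadic[of "1 + \<bar>t\<bar>"] by auto
  have tin: "t \<in> {-(2^Suc n)..2^Suc n}" using n(2) by auto
  have "(1 + \<bar>t\<bar>) powr (- q) \<le> ((2::real)^n) powr (- q)"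
    using n(1) q1 by (intro powr_mono2') auto
  also have "((2::real)^n) powr (- q) = 2 powr q * ((1/2) powr q)^Suc n"
  proof -
    have e1: "(2::real)^n = 2 powr real n" by (rule powr_realpow[symmetric]) simp
    have e2: "((1/2) powr q)^Suc n = (2::real) powr (- q * real (Suc n))"
      by (subst powr_realpow[symmetric]) (auto simp: powr_powr powr_divide powr_minus_divide[symmetric])
    show ?thesis unfolding e1 e2 powr_powr by (simp add: powr_add[symmetric] algebra_simps)
  qed
  finally have "ennreal (sg t * (1 + \<bar>t\<bar>) powr (- q))
      \<le> ennreal (2 powr q * ((1/2) powr q)^Suc n * (indicator {-(2^Suc n)..2^Suc n} t * sg t))"
    using tin sg_nonneg[of t] by (intro ennreal_leI) (auto simp: mult_left_mono mult.commute)
  also have "\<dots> \<le> (\<Sum>k. ennreal (2 powr q * ((1/2) powr q)^k * (indicator {-(2^k)..2^k} t * sg t)))"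
    by (rule ennreal_term_le_suminf[where f="\<lambda>k. ennreal (2 powr q * ((1/2) powr q)^k * (indicator {-(2^k)..2^k} t * sg t))"])
  finally show ?thesis .
qed

lemma tail_bound: "(\<integral>\<^sup>+t. ennreal (sg t * (1 + \<bar>t\<bar>) powr (- q)) \<partial>lborel) \<le> ennreal KT"
proof -
  have "(\<integral>\<^sup>+t. ennreal (sg t * (1 + \<bar>t\<bar>) powr (- q)) \<partial>lborel)
      \<le> (\<integral>\<^sup>+t. (\<Sum>k. ennreal (2 powr q * ((1/2) powr q)^k * (indicator {-(2^k)..2^k} t * sg t))) \<partial>lborel)"
    by (intro nn_integral_mono tail_pointwise)
  also have "\<dots> = (\<Sum>k. (\<integral>\<^sup>+t. ennreal (2 powr q * ((1/2) powr q)^k * (indicator {-(2^k)..2^k} t * sg t)) \<partial>lborel))"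
    by (rule nn_integral_suminf) measurable
  also have "\<dots> = (\<Sum>k. ennreal (2 powr q * ((1/2) powr q)^k) * ennreal (Sl.H (-(2^k)) (2^k)))"
  proof -
    have "(\<integral>\<^sup>+t. ennreal (2 powr q * ((1/2) powr q)^k * (indicator {-(2^k)..2^k} t * sg t)) \<partial>lborel)
        = ennreal (2 powr q * ((1/2) powr q)^k) * ennreal (Sl.H (-(2^k)) (2^k))" for k
    proof -
      have "(\<integral>\<^sup>+t. ennreal (2 powr q * ((1/2) powr q)^k * (indicator {-(2^k)..2^k} t * sg t)) \<partial>lborel)
          = (\<integral>\<^sup>+t. ennreal (2 powr q * ((1/2) powr q)^k) * ennreal (indicator {-(2^k)..2^k} t * sg t) \<partial>lborel)"
        by (intro nn_integral_cong) (simp add: ennreal_mult sg_nonneg)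
      also have "\<dots> = ennreal (2 powr q * ((1/2) powr q)^k) * (\<integral>\<^sup>+t. ennreal (indicator {-(2^k)..2^k} t * sg t) \<partial>lborel)"
        by (rule nn_integral_cmult) measurable
      finally show ?thesis by (simp add: Sl.H_nn)
    qed
    then show ?thesis by simp
  qed
  also have "\<dots> \<le> (\<Sum>k. ennreal (2 powr q * KS * rhoW^k))"
  proof (rule ennreal_suminf_mono)
    fix k
    have "2 powr q * ((1/2) powr q)^k * Sl.H (-(2^k)) (2^k)
        \<le> 2 powr q * ((1/2) powr q)^k * (KS * (2 powr q)^k * rhoW^k)"
      by (intro mult_left_mono S_tail) auto
    also have "\<dots> = 2 powr q * KS * rhoW^k * ((1/2) powr q * 2 powr q)^k"
      by (simp add: power_mult_distrib)
    also have "(1/2) powr q * 2 powr q = (1::real)"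
      by (simp add: powr_divide)
    finally show "ennreal (2 powr q * ((1/2) powr q)^k) * ennreal (Sl.H (-(2^k)) (2^k)) \<le> ennreal (2 powr q * KS * rhoW^k)"
      by (simp add: ennreal_mult[symmetric] Sl.H_nonneg ennreal_leI)
  qed
  also have "\<dots> = ennreal (\<Sum>k. 2 powr q * KS * rhoW^k)"
    using rhoW KS_def C_pos by (intro suminf_ennreal2) (auto intro!: summable_mult summable_geometric)
  also have "(\<Sum>k. 2 powr q * KS * rhoW^k) = KT"
    unfolding KT_def using rhoW by (simp add: suminf_mult suminf_geometric summable_geometric divide_simps)
  finally show ?thesis .
qed


definition dl :: real where "dl = log 2 (2 / (2 - kS))"
definition rS :: real where "rS = 2 powr dl * (1 - kS)"
definition KP :: real where "KP = 2 powr dl / (1 - rS)"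

lemma two_dl: "2 powr dl = 2 / (2 - kS)"
  unfolding dl_def using kS_le1 kS_pos by simp

lemma dl_pos: "0 < dl"
  unfolding dl_def using kS_le1 kS_pos by (simp add: field_simps)

lemma rS: "0 \<le> rS" "rS < 1"
  unfolding rS_def two_dl using kS_le1 kS_pos by (auto simp: field_simps)

lemma sing_pointwise:
  "ennreal (if 0 < \<bar>x - t\<bar> \<and> \<bar>x - t\<bar> < 1 then \<bar>x - t\<bar> powr (- dl) * sg t else 0)
   \<le> (\<Sum>j. ennreal (2 powr dl * (2 powr dl)^j * (indicator {x - (1/2)^j..x + (1/2)^j} t * sg t)))"
proof (cases "0 < \<bar>x - t\<bar> \<and> \<bar>x - t\<bar> < 1")
  case False then show ?thesis by (simp only: if_False) simp
next
  case True
  define y where "y = 1 / \<bar>x - t\<bar>"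
  have y1: "1 \<le> y" unfolding y_def using True by simp
  obtain n where n: "2^n \<le> y" "y < 2^Suc n" using dyadic[OF y1] by auto
  have "\<bar>x - t\<bar> \<le> (1/2)^n"
    using n(1) True unfolding y_def by (simp add: field_simps power_divide)
  then have tin: "t \<in> {x - (1/2)^n..x + (1/2)^n}" by auto
  have "\<bar>x - t\<bar> powr (- dl) = y powr dl"
    unfolding y_def using True by (simp add: powr_minus_divide powr_divide)
  also have "\<dots> \<le> ((2::real)^Suc n) powr dl"
    using n(2) y1 dl_pos by (intro powr_mono2) auto
  also have "((2::real)^Suc n) powr dl = 2 powr dl * (2 powr dl)^n"
  proof -
    have e1: "(2::real)^Suc n = 2 powr real (Suc n)" by (rule powr_realpow[symmetric]) simp
    have e2: "(2 powr dl)^n = (2::real) powr (dl * real n)"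
      by (subst powr_realpow[symmetric]) (auto simp: powr_powr)
    show ?thesis unfolding e1 e2 powr_powr by (simp add: powr_add[symmetric] algebra_simps)
  qed
  finally have "ennreal (if 0 < \<bar>x - t\<bar> \<and> \<bar>x - t\<bar> < 1 then \<bar>x - t\<bar> powr (- dl) * sg t else 0)
      \<le> ennreal (2 powr dl * (2 powr dl)^n * (indicator {x - (1/2)^n..x + (1/2)^n} t * sg t))"
    using True tin sg_nonneg[of t] by (intro ennreal_leI) (auto simp: mult_right_mono)
  also have "\<dots> \<le> (\<Sum>j. ennreal (2 powr dl * (2 powr dl)^j * (indicator {x - (1/2)^j..x + (1/2)^j} t * sg t)))"
    by (rule ennreal_term_le_suminf[where f="\<lambda>j. ennreal (2 powr dl * (2 powr dl)^j * (indicator {x - (1/2)^j..x + (1/2)^j} t * sg t))"])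
  finally show ?thesis .
qed

lemma sing_bound:
  "(\<integral>\<^sup>+t. ennreal (if 0 < \<bar>x - t\<bar> \<and> \<bar>x - t\<bar> < 1 then \<bar>x - t\<bar> powr (- dl) * sg t else 0) \<partial>lborel)
   \<le> ennreal (KP * Sl.H (x - 1) (x + 1))"
proof -
  define S1 where "S1 = Sl.H (x - 1) (x + 1)"
  have S10: "0 \<le> S1" unfolding S1_def by (rule Sl.H_nonneg)
  have "(\<integral>\<^sup>+t. ennreal (if 0 < \<bar>x - t\<bar> \<and> \<bar>x - t\<bar> < 1 then \<bar>x - t\<bar> powr (- dl) * sg t else 0) \<partial>lborel)
      \<le> (\<integral>\<^sup>+t. (\<Sum>j. ennreal (2 powr dl * (2 powr dl)^j * (indicator {x - (1/2)^j..x + (1/2)^j} t * sg t))) \<partial>lborel)"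
    by (intro nn_integral_mono sing_pointwise)
  also have "\<dots> = (\<Sum>j. (\<integral>\<^sup>+t. ennreal (2 powr dl * (2 powr dl)^j * (indicator {x - (1/2)^j..x + (1/2)^j} t * sg t)) \<partial>lborel))"
    by (rule nn_integral_suminf) measurable
  also have "\<dots> = (\<Sum>j. ennreal (2 powr dl * (2 powr dl)^j) * ennreal (Sl.H (x - (1/2)^j) (x + (1/2)^j)))"
  proof -
    have "(\<integral>\<^sup>+t. ennreal (2 powr dl * (2 powr dl)^j * (indicator {x - (1/2)^j..x + (1/2)^j} t * sg t)) \<partial>lborel)
        = ennreal (2 powr dl * (2 powr dl)^j) * ennreal (Sl.H (x - (1/2)^j) (x + (1/2)^j))" for j
    proof -
      have "(\<integral>\<^sup>+t. ennreal (2 powr dl * (2 powr dl)^j * (indicator {x - (1/2)^j..x + (1/2)^j} t * sg t)) \<partial>lborel)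
          = (\<integral>\<^sup>+t. ennreal (2 powr dl * (2 powr dl)^j) * ennreal (indicator {x - (1/2)^j..x + (1/2)^j} t * sg t) \<partial>lborel)"
        by (intro nn_integral_cong) (simp add: ennreal_mult sg_nonneg)
      also have "\<dots> = ennreal (2 powr dl * (2 powr dl)^j) * (\<integral>\<^sup>+t. ennreal (indicator {x - (1/2)^j..x + (1/2)^j} t * sg t) \<partial>lborel)"
        by (rule nn_integral_cmult) measurable
      finally show ?thesis by (simp add: Sl.H_nn)
    qed
    then show ?thesis by simp
  qed
  also have "\<dots> \<le> (\<Sum>j. ennreal (2 powr dl * S1 * rS^j))"
  proof (rule ennreal_suminf_mono)
    fix j
    have "2 powr dl * (2 powr dl)^j * Sl.H (x - (1/2)^j) (x + (1/2)^j)
        \<le> 2 powr dl * (2 powr dl)^j * ((1 - kS)^j * S1)"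
      unfolding S1_def by (intro mult_left_mono S_decay) auto
    also have "\<dots> = 2 powr dl * S1 * rS^j"
      unfolding rS_def by (simp add: power_mult_distrib)
    finally show "ennreal (2 powr dl * (2 powr dl)^j) * ennreal (Sl.H (x - (1/2)^j) (x + (1/2)^j)) \<le> ennreal (2 powr dl * S1 * rS^j)"
      by (simp add: ennreal_mult[symmetric] Sl.H_nonneg ennreal_leI)
  qed
  also have "\<dots> = ennreal (\<Sum>j. 2 powr dl * S1 * rS^j)"
    using rS S10 by (intro suminf_ennreal2) (auto intro!: summable_mult summable_geometric)
  also have "(\<Sum>j. 2 powr dl * S1 * rS^j) = KP * S1"
    unfolding KP_def using rS by (simp add: suminf_mult suminf_geometric summable_geometric divide_simps)
  finally show ?thesis unfolding S1_def .
qed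


definition gm :: real where "gm = dl / q"
lemma gm_pos: "0 < gm" unfolding gm_def using dl_pos q1 by simp

lemma neg_ln_le: assumes "0 < s" shows "- ln s \<le> s powr (- gm) / gm"
proof -
  have "ln (s powr (- gm)) \<le> s powr (- gm) - 1" by (rule ln_le_minus_one) (use assms in simp)
  then have "- gm * ln s \<le> s powr (- gm)" using assms by (simp add: ln_powr)
  then show ?thesis using gm_pos by (simp add: field_simps)
qed

lemma kernel_far:
  fixes x t R :: real
  assumes R: "0 < R" "\<bar>x\<bar> \<le> R" and t: "2 * R + 1 < \<bar>t\<bar>"
  shows "\<bar>ln (\<bar>x - t\<bar> / (1 + \<bar>t\<bar>))\<bar> \<le> 2 * (1 + R) * (1 + \<bar>t\<bar>) powr (-1)"
proof -
  define s u where "s = \<bar>x - t\<bar>" "u = 1 + \<bar>t\<bar>"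
  have u0: "0 < u" unfolding s_u_def by (rule add_pos_nonneg) auto
  have s1: "\<bar>t\<bar> - R \<le> s" unfolding s_u_def using R by linarith
  have s2: "s \<le> \<bar>t\<bar> + R" unfolding s_u_def using R by linarith
  have s0: "0 < s" using s1 t R by linarith
  have su: "u \<le> 2 * s" using s1 t s_u_def(2) by linarith
  have "\<bar>ln (s / u)\<bar> \<le> 2 * (1 + R) / u"
  proof (cases "u \<le> s")
    case True
    have "ln (s / u) \<le> s / u - 1" by (rule ln_le_minus_one) (use s0 u0 in simp)
    also have "\<dots> = (s - u) / u" using u0 by (simp add: field_simps)
    also have "\<dots> \<le> 2 * (1 + R) / u" using u0 s2 R unfolding s_u_def by (intro divide_right_mono) auto
    finally show ?thesis using True s0 u0 by (simp add: abs_if)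
  next
    case False
    have "ln (u / s) \<le> u / s - 1" by (rule ln_le_minus_one) (use s0 u0 in simp)
    also have "\<dots> = (u - s) / s" using s0 by (simp add: field_simps)
    also have "\<dots> \<le> (1 + R) / s" using s0 s1 unfolding s_u_def by (intro divide_right_mono) auto
    also have "\<dots> \<le> 2 * (1 + R) / u"
    proof -
      have "(1 + R) * u \<le> (1 + R) * (2 * s)" using su R by (intro mult_left_mono) auto
      then show ?thesis using s0 u0 by (simp add: field_simps)
    qed
    finally have "ln (u / s) \<le> 2 * (1 + R) / u" .
    moreover have "ln (s / u) = - ln (u / s)" using s0 u0 by (simp add: ln_div)
    ultimately show ?thesis using False s0 u0 by (simp add: abs_if)
  qed
  then show ?thesis unfolding s_u_def using u0 by (simp add: powr_minus_divide)
qed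

lemma kernel_near:
  fixes x t R :: real
  assumes R: "0 < R" "\<bar>x\<bar> \<le> R" and t: "\<bar>t\<bar> \<le> 2 * R + 1"
  shows "\<bar>ln (\<bar>x - t\<bar> / (1 + \<bar>t\<bar>))\<bar> \<le> (5 * R + 2)
     + (if 0 < \<bar>x - t\<bar> \<and> \<bar>x - t\<bar> < 1 then \<bar>x - t\<bar> powr (- gm) / gm else 0)"
proof (cases "x = t")
  case True then show ?thesis using R by simp
next
  case False
  define s u where "s = \<bar>x - t\<bar>" "u = 1 + \<bar>t\<bar>"
  have u0: "0 < u" and s0: "0 < s" unfolding s_u_def using False by auto
  have lnu: "0 \<le> ln u" "ln u \<le> 2 * R + 1"
    using ln_le_minus_one[OF u0] t u0 unfolding s_u_def by auto
  have e: "ln (s / u) = ln s - ln u" using s0 u0 by (simp add: ln_div)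
  show ?thesis
  proof (cases "s < 1")
    case True
    have "\<bar>ln s\<bar> = - ln s" using True s0 by simp
    also have "\<dots> \<le> s powr (- gm) / gm" by (rule neg_ln_le[OF s0])
    finally have "\<bar>ln (s / u)\<bar> \<le> (5 * R + 2) + s powr (- gm) / gm"
      unfolding e using lnu R by linarith
    then have "\<bar>ln (s / u)\<bar> \<le> (5 * R + 2) + (if 0 < s \<and> s < 1 then s powr (- gm) / gm else 0)"
      using True s0 by simp
    then show ?thesis unfolding s_u_def .
  next
    case False
    have "0 \<le> ln s" using False by simp
    moreover have "ln s \<le> s - 1" by (rule ln_le_minus_one[OF s0])
    moreover have "s \<le> R + (2 * R + 1)" unfolding s_u_def using R t by linarith
    ultimately have "\<bar>ln (s / u)\<bar> \<le> (5 * R + 2)"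
      unfolding e using lnu R by linarith
    then have "\<bar>ln (s / u)\<bar> \<le> (5 * R + 2) + (if 0 < s \<and> s < 1 then s powr (- gm) / gm else 0)"
      using False by simp
    then show ?thesis unfolding s_u_def .
  qed
qed

definition gfun :: "real \<Rightarrow> real \<Rightarrow> real \<Rightarrow> real" where
  "gfun R x t = (if \<bar>t\<bar> \<le> 2 * R + 1 then 5 * R + 2 else 0)
     + (if 0 < \<bar>x - t\<bar> \<and> \<bar>x - t\<bar> < 1 then \<bar>x - t\<bar> powr (- gm) / gm else 0)
     + 2 * (1 + R) * (1 + \<bar>t\<bar>) powr (-1)"

lemma kernel_bound:
  fixes x t R :: real
  assumes R: "0 < R" "\<bar>x\<bar> \<le> R"
  shows "\<bar>ln (\<bar>x - t\<bar> / (1 + \<bar>t\<bar>))\<bar> \<le> gfun R x t"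
proof (cases "\<bar>t\<bar> \<le> 2 * R + 1")
  case True
  have "0 \<le> 2 * (1 + R) * (1 + \<bar>t\<bar>) powr (-1)" using R by simp
  moreover have "(if \<bar>t\<bar> \<le> 2 * R + 1 then 5 * R + 2 else 0) = 5 * R + 2" using True by simp
  ultimately show ?thesis using kernel_near[OF R True] unfolding gfun_def by linarith
next
  case False
  have "0 \<le> (if 0 < \<bar>x - t\<bar> \<and> \<bar>x - t\<bar> < 1 then \<bar>x - t\<bar> powr (- gm) / gm else 0)"
    using gm_pos by simp
  moreover have "(if \<bar>t\<bar> \<le> 2 * R + 1 then 5 * R + 2 else 0) = 0" using False by simp
  moreover have "2 * R + 1 < \<bar>t\<bar>" using False by simp
  ultimately show ?thesis using kernel_far[OF R] unfolding gfun_def by fastforce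
qed

lemma sum3_powr:
  fixes a b c r :: real
  assumes "0 \<le> a" "0 \<le> b" "0 \<le> c" "0 < r"
  shows "(a + b + c) powr r \<le> 3 powr r * (a powr r + b powr r + c powr r)"
proof -
  define m where "m = max a (max b c)"
  have "(a + b + c) powr r \<le> (3 * m) powr r"
    using assms unfolding m_def by (intro powr_mono2) auto
  also have "\<dots> = 3 powr r * m powr r" using assms unfolding m_def by (simp add: powr_mult)
  also have "m powr r \<le> a powr r + b powr r + c powr r"
    using assms unfolding m_def by (auto simp: max_def)
  then have "3 powr r * m powr r \<le> 3 powr r * (a powr r + b powr r + c powr r)"
    by (intro mult_left_mono) auto
  finally show ?thesis .
qed

lemma gfun_powr:
  assumes R: "0 < R"
  shows "gfun R x t powr q * sg t \<le> 3 powr q *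
     ((5 * R + 2) powr q * (indicator {-(2 * R + 1)..2 * R + 1} t * sg t)
      + gm powr (- q) * (if 0 < \<bar>x - t\<bar> \<and> \<bar>x - t\<bar> < 1 then \<bar>x - t\<bar> powr (- dl) * sg t else 0)
      + (2 * (1 + R)) powr q * (sg t * (1 + \<bar>t\<bar>) powr (- q)))"
proof -
  define a b c where "a = (if \<bar>t\<bar> \<le> 2 * R + 1 then 5 * R + 2 else 0)"
    "b = (if 0 < \<bar>x - t\<bar> \<and> \<bar>x - t\<bar> < 1 then \<bar>x - t\<bar> powr (- gm) / gm else 0)"
    "c = 2 * (1 + R) * (1 + \<bar>t\<bar>) powr (-1)"
  have abc: "0 \<le> a" "0 \<le> b" "0 \<le> c" unfolding a_b_c_def using R gm_pos by auto
  have "gfun R x t powr q \<le> 3 powr q * (a powr q + b powr q + c powr q)"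
    unfolding gfun_def a_b_c_def[symmetric] by (rule sum3_powr[OF abc]) (use q1 in simp)
  also have "a powr q = (5 * R + 2) powr q * indicator {-(2 * R + 1)..2 * R + 1} t"
    unfolding a_b_c_def using R by (auto simp: indicator_def abs_le_iff)
  also have "b powr q = gm powr (- q) * (if 0 < \<bar>x - t\<bar> \<and> \<bar>x - t\<bar> < 1 then \<bar>x - t\<bar> powr (- dl) else 0)"
  proof -
    have "(s powr (-gm) / gm) powr q = s powr (- dl) * gm powr (- q)" if s0: "0 < s" for s
    proof -
      have "(s powr (-gm) / gm) powr q = (s powr (-gm)) powr q / gm powr q"
        using gm_pos by (simp add: powr_divide)
      also have "(s powr (-gm)) powr q = s powr (- dl)"
        using q1 by (simp add: powr_powr gm_def)
      finally show ?thesis by (simp add: powr_minus_divide)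
    qed
    then show ?thesis unfolding a_b_c_def using q1 by auto
  qed
  also have "c powr q = (2 * (1 + R)) powr q * (1 + \<bar>t\<bar>) powr (- q)"
  proof -
    have "c = (2 * (1 + R)) / (1 + \<bar>t\<bar>)" unfolding a_b_c_def by (simp add: powr_minus_divide)
    then have "c powr q = (2 * (1 + R)) powr q / (1 + \<bar>t\<bar>) powr q"
      using R by (simp add: powr_divide)
    then show ?thesis by (simp add: powr_minus_divide)
  qed
  finally have "gfun R x t powr q * sg t \<le> 3 powr q * ((5 * R + 2) powr q * indicator {-(2 * R + 1)..2 * R + 1} t
      + gm powr (- q) * (if 0 < \<bar>x - t\<bar> \<and> \<bar>x - t\<bar> < 1 then \<bar>x - t\<bar> powr (- dl) else 0)
      + (2 * (1 + R)) powr q * (1 + \<bar>t\<bar>) powr (- q)) * sg t"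
    using sg_nonneg[of t] by (intro mult_right_mono) auto
  moreover have "3 powr q * ((5 * R + 2) powr q * indicator {-(2 * R + 1)..2 * R + 1} t
      + gm powr (- q) * (if 0 < \<bar>x - t\<bar> \<and> \<bar>x - t\<bar> < 1 then \<bar>x - t\<bar> powr (- dl) else 0)
      + (2 * (1 + R)) powr q * (1 + \<bar>t\<bar>) powr (- q)) * sg t
    = 3 powr q *
     ((5 * R + 2) powr q * (indicator {-(2 * R + 1)..2 * R + 1} t * sg t)
      + gm powr (- q) * (if 0 < \<bar>x - t\<bar> \<and> \<bar>x - t\<bar> < 1 then \<bar>x - t\<bar> powr (- dl) * sg t else 0)
      + (2 * (1 + R)) powr q * (sg t * (1 + \<bar>t\<bar>) powr (- q)))"
    by (cases "0 < \<bar>x - t\<bar> \<and> \<bar>x - t\<bar> < 1") (simp_all only: if_True if_False, simp_all add: algebra_simps)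
  ultimately show ?thesis by linarith
qed

lemma young_pointwise:
  assumes wt: "0 < w t" and g: "0 \<le> g"
  shows "\<bar>fv\<bar> * g \<le> \<bar>fv\<bar> powr p * w t / p + g powr q * sg t / q"
proof -
  have "(\<bar>fv\<bar> * w t powr (1/p)) * (g * w t powr (- (1/p)))
      \<le> (\<bar>fv\<bar> * w t powr (1/p)) powr p / p + (g * w t powr (- (1/p))) powr q / q"
    by (rule Youngs_inequality) (use p1 q1 pq g in auto)
  also have "(\<bar>fv\<bar> * w t powr (1/p)) * (g * w t powr (- (1/p))) = \<bar>fv\<bar> * g"
    using wt by (simp add: powr_minus field_simps)
  also have "(\<bar>fv\<bar> * w t powr (1/p)) powr p = \<bar>fv\<bar> powr p * w t"
    using wt p1 by (simp add: powr_mult powr_powr)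
  also have "(g * w t powr (- (1/p))) powr q = g powr q * sg t"
  proof -
    have "- (1/p) * q = 1 - q" using pq q1 p1 by (simp add: field_simps)
    then show ?thesis using wt g unfolding sg_def by (simp add: powr_mult powr_powr)
  qed
  finally show ?thesis .
qed

end


lemma nn_to_int:
  fixes G :: "real \<Rightarrow> real"
  assumes [measurable]: "G \<in> borel_measurable lborel" and nn: "\<And>t. 0 \<le> G t"
    and b: "(\<integral>\<^sup>+t. ennreal (G t) \<partial>lborel) \<le> ennreal K" and K: "0 \<le> K"
  shows "integrable lborel G" "integral\<^sup>L lborel G \<le> K"
proof -
  show i: "integrable lborel G"
    unfolding integrable_iff_bounded using b nn
    by (auto simp: top_unique dest: order.strict_trans1[OF _ ennreal_less_top[of K]])
  have "ennreal (integral\<^sup>L lborel G) \<le> ennreal K"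
    using b nn_integral_eq_integral[OF i] nn by simp
  then show "integral\<^sup>L lborel G \<le> K" using K by (simp add: ennreal_le_iff)
qed

locale apwf = apw +
  fixes f :: "real \<Rightarrow> real"
  assumes fL: "in_Lp_weighted p w f"
begin

lemma f_meas[measurable]: "f \<in> borel_measurable lborel" using fL unfolding in_Lp_weighted_def by auto
lemma f_int: "integrable lborel (\<lambda>t. \<bar>f t\<bar> powr p * w t)" using fL unfolding in_Lp_weighted_def by auto

definition Nf :: real where "Nf = integral\<^sup>L lborel (\<lambda>t. \<bar>f t\<bar> powr p * w t)"

definition G2 :: "real \<Rightarrow> real \<Rightarrow> real" where
  "G2 x t = (if 0 < \<bar>x - t\<bar> \<and> \<bar>x - t\<bar> < 1 then \<bar>x - t\<bar> powr (- dl) * sg t else 0)"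
definition G3 :: "real \<Rightarrow> real" where
  "G3 t = sg t * (1 + \<bar>t\<bar>) powr (- q)"

lemma G2_meas[measurable]: "G2 x \<in> borel_measurable lborel"
  unfolding G2_def by measurable
lemma G3_meas[measurable]: "G3 \<in> borel_measurable lborel"
  unfolding G3_def by measurable

lemma G2_int: "integrable lborel (G2 x)" and G2_le: "integral\<^sup>L lborel (G2 x) \<le> KP * Sl.H (x - 1) (x + 1)"
proof -
  have K: "0 \<le> KP * Sl.H (x - 1) (x + 1)"
    unfolding KP_def using rS Sl.H_nonneg by simp
  have nn: "\<And>t. 0 \<le> G2 x t" unfolding G2_def using sg_nonneg by simp
  show "integrable lborel (G2 x)" "integral\<^sup>L lborel (G2 x) \<le> KP * Sl.H (x - 1) (x + 1)"
    using nn_to_int[OF G2_meas nn _ K] sing_bound[of x] unfolding G2_def by auto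
qed

lemma G3_int: "integrable lborel G3" and G3_le: "integral\<^sup>L lborel G3 \<le> KT"
proof -
  have K: "0 \<le> KT"
    unfolding KT_def KS_def using rhoW C_pos Wl.H_nonneg by simp
  have nn: "\<And>t. 0 \<le> G3 t" unfolding G3_def using sg_nonneg by simp
  show "integrable lborel G3" "integral\<^sup>L lborel G3 \<le> KT"
    using nn_to_int[OF G3_meas nn _ K] tail_bound unfolding G3_def by auto
qed

definition RHS :: "real \<Rightarrow> real \<Rightarrow> real \<Rightarrow> real" where
  "RHS R x t = \<bar>f t\<bar> powr p * w t / p + 3 powr q / q *
     ((5 * R + 2) powr q * (indicator {-(2 * R + 1)..2 * R + 1} t * sg t)
      + gm powr (- q) * G2 x t + (2 * (1 + R)) powr q * G3 t)"

lemma RHS_int: "integrable lborel (RHS R x)"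
  unfolding RHS_def
  by (intro Bochner_Integration.integrable_add integrable_divide integrable_mult_right
      f_int Sl.h_int_ind G2_int G3_int)

definition BB :: "real \<Rightarrow> real" where
  "BB R = Nf / p + 3 powr q / q * ((5 * R + 2) powr q * Sl.H (-(2 * R + 1)) (2 * R + 1)
      + gm powr (- q) * (KP * Sl.H (-R - 1) (R + 1)) + (2 * (1 + R)) powr q * KT)"

lemma RHS_integral:
  assumes "\<bar>x\<bar> \<le> R"
  shows "integral\<^sup>L lborel (RHS R x) \<le> BB R"
proof -
  have e: "integral\<^sup>L lborel (RHS R x) = Nf / p + 3 powr q / q *
     ((5 * R + 2) powr q * Sl.H (-(2 * R + 1)) (2 * R + 1)
      + gm powr (- q) * integral\<^sup>L lborel (G2 x) + (2 * (1 + R)) powr q * integral\<^sup>L lborel G3)"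
    unfolding RHS_def Nf_def Sl.H_alt
    by (simp add: Bochner_Integration.integral_add integrable_divide integrable_mult_right
      f_int Sl.h_int_ind G2_int G3_int Bochner_Integration.integrable_add)
  have "Sl.H (x - 1) (x + 1) \<le> Sl.H (-R - 1) (R + 1)"
    using assms by (intro Sl.H_mono) auto
  then have "integral\<^sup>L lborel (G2 x) \<le> KP * Sl.H (-R - 1) (R + 1)"
    using G2_le[of x] rS unfolding KP_def by (smt (verit) divide_nonneg_pos mult_left_mono powr_ge_zero)
  then have "gm powr (- q) * integral\<^sup>L lborel (G2 x) \<le> gm powr (- q) * (KP * Sl.H (-R - 1) (R + 1))"
    by (intro mult_left_mono) auto
  moreover have "(2 * (1 + R)) powr q * integral\<^sup>L lborel G3 \<le> (2 * (1 + R)) powr q * KT"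
    using G3_le by (intro mult_left_mono) auto
  ultimately have "(5 * R + 2) powr q * Sl.H (-(2 * R + 1)) (2 * R + 1)
      + gm powr (- q) * integral\<^sup>L lborel (G2 x) + (2 * (1 + R)) powr q * integral\<^sup>L lborel G3
      \<le> (5 * R + 2) powr q * Sl.H (-(2 * R + 1)) (2 * R + 1)
      + gm powr (- q) * (KP * Sl.H (-R - 1) (R + 1)) + (2 * (1 + R)) powr q * KT" by linarith
  then have "3 powr q / q * ((5 * R + 2) powr q * Sl.H (-(2 * R + 1)) (2 * R + 1)
      + gm powr (- q) * integral\<^sup>L lborel (G2 x) + (2 * (1 + R)) powr q * integral\<^sup>L lborel G3)
      \<le> 3 powr q / q * ((5 * R + 2) powr q * Sl.H (-(2 * R + 1)) (2 * R + 1)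
      + gm powr (- q) * (KP * Sl.H (-R - 1) (R + 1)) + (2 * (1 + R)) powr q * KT)"
    using q1 by (intro mult_left_mono) auto
  then show ?thesis unfolding e BB_def by linarith
qed

lemma kf_pointwise:
  assumes R: "0 < R" "\<bar>x\<bar> \<le> R" and wt: "0 < w t"
  shows "\<bar>ln (\<bar>x - t\<bar> / (1 + \<bar>t\<bar>)) * f t\<bar> \<le> RHS R x t"
proof -
  have g0: "0 \<le> gfun R x t" using kernel_bound[OF R, of t] by linarith
  have "\<bar>ln (\<bar>x - t\<bar> / (1 + \<bar>t\<bar>)) * f t\<bar> \<le> \<bar>f t\<bar> * gfun R x t"
    using kernel_bound[OF R, of t] by (simp add: abs_mult mult.commute mult_left_mono)
  also have "\<dots> \<le> \<bar>f t\<bar> powr p * w t / p + gfun R x t powr q * sg t / q"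
    by (rule young_pointwise[OF wt g0])
  also have "gfun R x t powr q * sg t / q \<le> 3 powr q *
     ((5 * R + 2) powr q * (indicator {-(2 * R + 1)..2 * R + 1} t * sg t)
      + gm powr (- q) * G2 x t + (2 * (1 + R)) powr q * G3 t) / q"
    using gfun_powr[OF R(1), of x t] q1 unfolding G2_def G3_def by (intro divide_right_mono) auto
  finally show ?thesis unfolding RHS_def by simp
qed

lemma kf_int_bound:
  assumes R: "0 < R" "\<bar>x\<bar> \<le> R"
  shows "integrable lborel (\<lambda>t. ln (\<bar>x - t\<bar> / (1 + \<bar>t\<bar>)) * f t)"
    and "\<bar>integral\<^sup>L lborel (\<lambda>t. ln (\<bar>x - t\<bar> / (1 + \<bar>t\<bar>)) * f t)\<bar> \<le> BB R"
proof -
  have AEb: "AE t in lborel. norm (ln (\<bar>x - t\<bar> / (1 + \<bar>t\<bar>)) * f t) \<le> RHS R x t"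
    using w_pos by eventually_elim (use kf_pointwise[OF R] in auto)
  show i: "integrable lborel (\<lambda>t. ln (\<bar>x - t\<bar> / (1 + \<bar>t\<bar>)) * f t)"
  proof (rule Bochner_Integration.integrable_bound[OF RHS_int])
    show "(\<lambda>t. ln (\<bar>x - t\<bar> / (1 + \<bar>t\<bar>)) * f t) \<in> borel_measurable lborel" by measurable
    show "AE t in lborel. norm (ln (\<bar>x - t\<bar> / (1 + \<bar>t\<bar>)) * f t) \<le> norm (RHS R x t)"
      using AEb by eventually_elim auto
  qed
  have "\<bar>integral\<^sup>L lborel (\<lambda>t. ln (\<bar>x - t\<bar> / (1 + \<bar>t\<bar>)) * f t)\<bar>
      \<le> integral\<^sup>L lborel (\<lambda>t. norm (ln (\<bar>x - t\<bar> / (1 + \<bar>t\<bar>)) * f t))"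
    using integral_norm_bound[of lborel "\<lambda>t. ln (\<bar>x - t\<bar> / (1 + \<bar>t\<bar>)) * f t"] by simp
  also have "\<dots> \<le> integral\<^sup>L lborel (RHS R x)"
    by (rule integral_mono_AE[OF _ RHS_int AEb]) (use i in auto)
  also have "\<dots> \<le> BB R" by (rule RHS_integral[OF R(2)])
  finally show "\<bar>integral\<^sup>L lborel (\<lambda>t. ln (\<bar>x - t\<bar> / (1 + \<bar>t\<bar>)) * f t)\<bar> \<le> BB R" .
qed

end


theorem lemma2p8:
  fixes p :: real and \<Psi> \<Psi>inv w f :: "real \<Rightarrow> real"
  assumes "1 < p"
    and "homeomorphism UNIV UNIV \<Psi> \<Psi>inv"
    and "locally_abs_continuous \<Psi>"
    and "Ap_weight p w"
    and "in_Lp_weighted p w f"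
  shows "(\<forall>x. integrable lborel (\<lambda>t. ln (\<bar>x - t\<bar> / (1 + \<bar>t\<bar>)) * f t))
         \<and> locally_integrable (\<lambda>x. opB f (\<Psi> x))"
proof -
  interpret apwf p w f
    by unfold_locales (use assms in auto)
  have I: "\<forall>x. integrable lborel (\<lambda>t. ln (\<bar>x - t\<bar> / (1 + \<bar>t\<bar>)) * f t)"
  proof
    fix x :: real
    show "integrable lborel (\<lambda>t. ln (\<bar>x - t\<bar> / (1 + \<bar>t\<bar>)) * f t)"
      by (rule kf_int_bound(1)[of "\<bar>x\<bar> + 1"]) auto
  qed
  have opB_bound: "\<bar>opB f x\<bar> \<le> BB R / pi" if "0 < R" "\<bar>x\<bar> \<le> R" for R x
    using kf_int_bound(2)[OF that] unfolding opB_def by (simp add: abs_mult divide_right_mono)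
  have opB_meas: "opB f \<in> borel_measurable lborel"
  proof -
    have "(\<lambda>(x, t). ln (\<bar>x - t\<bar> / (1 + \<bar>t\<bar>)) * f t) \<in> borel_measurable (lborel \<Otimes>\<^sub>M lborel)"
      by measurable
    from lborel.borel_measurable_lebesgue_integral[OF this]
    show ?thesis unfolding opB_def[abs_def] by measurable
  qed
  have contP: "continuous_on UNIV \<Psi>" using assms(2) unfolding homeomorphism_def by auto
  have PsiM: "\<Psi> \<in> borel_measurable lborel"
    using borel_measurable_continuous_onI[OF contP] by simp
  have L: "locally_integrable (\<lambda>x. opB f (\<Psi> x))"
    unfolding locally_integrable_def
  proof (intro allI impI)
    fix K :: "real set" assume K: "compact K"
    have "compact (\<Psi> ` K)" by (rule compact_continuous_image[OF continuous_on_subset[OF contP] K]) auto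
    then have "bounded (\<Psi> ` K)" by (rule compact_imp_bounded)
    then obtain R where R: "0 < R" "\<And>y. y \<in> K \<Longrightarrow> \<bar>\<Psi> y\<bar> \<le> R"
      unfolding bounded_pos by auto
    have Ks: "K \<in> sets lborel" using K by (simp add: compact_imp_closed borel_closed)
    have Kfin: "emeasure lborel K < \<infinity>" using emeasure_bounded_finite[OF compact_imp_bounded[OF K]] by simp
    show "set_integrable lborel K (\<lambda>x. opB f (\<Psi> x))"
      unfolding set_integrable_def
    proof (rule Bochner_Integration.integrable_bound)
      show "integrable lborel (\<lambda>y. BB R / pi * indicator K y)"
        by (intro integrable_mult_right integrable_real_indicator Ks Kfin)
      have oB: "opB f \<in> borel_measurable borel" using opB_meas by simp
      have "(\<lambda>y. opB f (\<Psi> y)) \<in> borel_measurable borel"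
        using measurable_compose[OF borel_measurable_continuous_onI[OF contP] oB] .
      then have [measurable]: "(\<lambda>y. opB f (\<Psi> y)) \<in> borel_measurable lborel" by simp
      show "(\<lambda>y. indicator K y *\<^sub>R opB f (\<Psi> y)) \<in> borel_measurable lborel"
        using Ks by measurable
      show "AE y in lborel. norm (indicator K y *\<^sub>R opB f (\<Psi> y)) \<le> norm (BB R / pi * indicator K y)"
      proof (rule AE_I2)
        fix y
        show "norm (indicator K y *\<^sub>R opB f (\<Psi> y)) \<le> norm (BB R / pi * indicator K y)"
          using opB_bound[OF R(1) R(2)[of y]] pi_gt_zero
          by (auto simp: indicator_def intro: order_trans[OF _ divide_right_mono[OF abs_ge_self]])
      qed
    qed
  qed
  from I L show ?thesis by blast
qed

end
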